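(* Let $p(z)=\prod_{j=1}^m (z-\alpha_j)^{b_j}$ be a polynomial with real coefficients, where $\alpha_1,\dots,\alpha_m$ are distinct complex numbers with $\Re(\alpha_j)<0$ and $b_j\in\mathbb N$. Let $q$ be a polynomial with real coefficients, $\deg(q)<\deg(p)$, having no common zero with $p$. For $t\in(0,1]$ let $F_t(z)=q(z)\,t^{-z-1}$ for $\Re(z)<0$, where $t^{-z-1}=\exp((-z-1)\log t)$, and define $$w(t)=F_t[\underbrace{\alpha_1,\ldots,\alpha_1}_{b_1\text{ times}},\underbrace{\alpha_2,\ldots,\alpha_2}_{b_2\text{ times}},\ldots,\underbrace{\alpha_m,\ldots,\alpha_m}_{b_m\text{ times}}],\qquad t\in(0,1].$$ Then $w$ is a real-valued continuous function on $(0,1]$, Lebesgue integrable on $(0,1]$, and $$\frac{q(n)}{p(n)}=\int_0^1 t^n w(t)\,dt\quad\text{for all } n\in\mathbb Z_+ .$$ (Thus $w$ is the weight function $w_{q,p}$ of the sequence $(q(n)/p(n))_{n\in\mathbb Z_+}$.)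
   Context: Divided differences: for a function $F$ and distinct complex numbers $x_1,\dots,x_m$, $F[x_1,\dots,x_m]=\sum_{j=1}^m F(x_j)/\prod_{k\neq j}(x_j-x_k)$. With repeated arguments, $F[\underbrace{x_1,\ldots,x_1}_{r_1+1},\ldots,\underbrace{x_m,\ldots,x_m}_{r_m+1}]:=\frac{1}{r_1!\cdots r_m!}\frac{\partial^{r_1+\cdots+r_m}}{\partial x_1^{r_1}\cdots\partial x_m^{r_m}}F[x_1,\dots,x_m]$, the derivative being evaluated at the given distinct points. *)

theory Defs
  imports "HOL-Analysis.Analysis" "HOL-Computational_Algebra.Polynomial"
begin

definition divdiff :: "(complex \<Rightarrow> complex) \<Rightarrow> nat \<Rightarrow> (nat \<Rightarrow> complex) \<Rightarrow> complex" where
  "divdiff F m x = (\<Sum>j<m. F (x j) / (\<Prod>k\<in>{..<m} - {j}. (x j - x k)))"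

definition cpartial :: "nat \<Rightarrow> ((nat \<Rightarrow> complex) \<Rightarrow> complex) \<Rightarrow> (nat \<Rightarrow> complex) \<Rightarrow> complex" where
  "cpartial j G x = deriv (\<lambda>z. G (x(j := z))) (x j)"

definition mixed_partial :: "(nat \<Rightarrow> nat) \<Rightarrow> nat \<Rightarrow> ((nat \<Rightarrow> complex) \<Rightarrow> complex) \<Rightarrow> (nat \<Rightarrow> complex) \<Rightarrow> complex" where
  "mixed_partial r m G = fold (\<lambda>j H. (cpartial j ^^ r j) H) [0..<m] G"

text \<open>Confluent divided difference: point x j repeated (r j + 1) times, j < m
  (the points x 0, ..., x (m-1) being distinct).\<close>
definition conf_divdiff :: "(complex \<Rightarrow> complex) \<Rightarrow> nat \<Rightarrow> (nat \<Rightarrow> complex) \<Rightarrow> (nat \<Rightarrow> nat) \<Rightarrow> complex" where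
  "conf_divdiff F m x r = mixed_partial r m (divdiff F m) x / (\<Prod>j<m. of_nat (fact (r j)))"

end

theory Submission
  imports Defs "HOL-Complex_Analysis.Complex_Analysis"
begin


lemma lagrange_one:
  fixes x :: "nat \<Rightarrow> complex"
  assumes inj: "inj_on x {..<m}" and m: "m > 0"
  shows "(\<Sum>j<m. (\<Prod>k\<in>{..<m}-{j}. (u - x k)) / (\<Prod>k\<in>{..<m}-{j}. (x j - x k))) = 1"
proof -
  define L where "L = (\<Sum>j<m. smult (1 / (\<Prod>k\<in>{..<m}-{j}. (x j - x k))) (\<Prod>k\<in>{..<m}-{j}. [:- x k, 1:]))"
  have pL: "poly L u = (\<Sum>j<m. (\<Prod>k\<in>{..<m}-{j}. (u - x k)) / (\<Prod>k\<in>{..<m}-{j}. (x j - x k)))" for u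
    by (simp add: L_def poly_sum poly_prod)
  have degj: "degree (smult (1 / (\<Prod>k\<in>{..<m}-{j}. (x j - x k))) (\<Prod>k\<in>{..<m}-{j}. [:- x k, 1:])) \<le> m - 1"
    if j: "j < m" for j
  proof -
    have "degree (smult (1 / (\<Prod>k\<in>{..<m}-{j}. (x j - x k))) (\<Prod>k\<in>{..<m}-{j}. [:- x k, 1:]))
       \<le> degree (\<Prod>k\<in>{..<m}-{j}. [:- x k, 1:])" by (rule degree_smult_le)
    also have "\<dots> \<le> (\<Sum>k\<in>{..<m}-{j}. degree [:- x k, 1:])"
      using degree_prod_sum_le[of "{..<m}-{j}" "\<lambda>k. [:- x k, 1:]"] by (simp add: o_def)
    also have "\<dots> = m - 1" using j by simp
    finally show ?thesis .
  qed
  have degL: "degree L \<le> m - 1"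
    unfolding L_def by (rule degree_sum_le) (simp, rule degj, simp)
  have "L = 1"
  proof (rule poly_eqI_degree[where A = "x ` {..<m}"])
    fix y assume "y \<in> x ` {..<m}"
    then obtain i where i: "i < m" "y = x i" by auto
    have "poly L y = (\<Sum>j\<in>{..<m}-{i}. (\<Prod>k\<in>{..<m}-{j}. (y - x k)) / (\<Prod>k\<in>{..<m}-{j}. (x j - x k)))
       + (\<Prod>k\<in>{..<m}-{i}. (y - x k)) / (\<Prod>k\<in>{..<m}-{i}. (x i - x k))"
      unfolding pL using i(1) by (subst sum.remove[of _ i]) auto
    also have "(\<Sum>j\<in>{..<m}-{i}. (\<Prod>k\<in>{..<m}-{j}. (y - x k)) / (\<Prod>k\<in>{..<m}-{j}. (x j - x k))) = 0"
    proof (intro sum.neutral ballI)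
      fix j assume j: "j \<in> {..<m}-{i}"
      have "(\<Prod>k\<in>{..<m}-{j}. (y - x k)) = 0"
        using i j by (intro prod_zero) auto
      then show "(\<Prod>k\<in>{..<m}-{j}. (y - x k)) / (\<Prod>k\<in>{..<m}-{j}. (x j - x k)) = 0" by simp
    qed
    also have "(\<Prod>k\<in>{..<m}-{i}. (x i - x k)) \<noteq> 0"
      using inj i(1) by (auto simp: inj_on_def)
    then have "(\<Prod>k\<in>{..<m}-{i}. (y - x k)) / (\<Prod>k\<in>{..<m}-{i}. (x i - x k)) = 1"
      using i by simp
    finally show "poly L y = poly 1 y" by simp
  next
    show "degree L < card (x ` {..<m})" using degL m card_image[OF inj] by simp
  next
    show "degree (1::complex poly) < card (x ` {..<m})" using m card_image[OF inj] by simp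
  qed
  then show ?thesis using pL[of u] by simp
qed

lemma partial_frac:
  fixes x :: "nat \<Rightarrow> complex"
  assumes inj: "inj_on x {..<m}" and m: "m > 0" and u: "\<forall>k<m. u \<noteq> x k"
  shows "1 / (\<Prod>k<m. (u - x k)) = (\<Sum>j<m. (1 / (\<Prod>k\<in>{..<m}-{j}. (x j - x k))) * (1 / (u - x j)))"
proof -
  have nz: "(\<Prod>k<m. (u - x k)) \<noteq> 0" using u by auto
  have "1 / (\<Prod>k<m. (u - x k)) = (\<Sum>j<m. (\<Prod>k\<in>{..<m}-{j}. (u - x k)) / (\<Prod>k\<in>{..<m}-{j}. (x j - x k))) / (\<Prod>k<m. (u - x k))"
    using lagrange_one[OF inj m] by simp
  also have "\<dots> = (\<Sum>j<m. (\<Prod>k\<in>{..<m}-{j}. (u - x k)) / (\<Prod>k\<in>{..<m}-{j}. (x j - x k)) / (\<Prod>k<m. (u - x k)))"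
    by (simp add: sum_divide_distrib)
  also have "\<dots> = (\<Sum>j<m. (1 / (\<Prod>k\<in>{..<m}-{j}. (x j - x k))) * (1 / (u - x j)))"
  proof (intro sum.cong refl)
    fix j assume j: "j \<in> {..<m}"
    have "(\<Prod>k<m. (u - x k)) = (u - x j) * (\<Prod>k\<in>{..<m}-{j}. (u - x k))"
      using j by (subst prod.remove[of _ j]) auto
    moreover have "(\<Prod>k\<in>{..<m}-{j}. (u - x k)) \<noteq> 0" using u by auto
    moreover have "u - x j \<noteq> 0" using u j by auto
    moreover have "A / C / ((u - x j) * A) = (1 / C) * (1 / (u - x j))" if "A \<noteq> 0" "u - x j \<noteq> 0" for A C :: complex
      using that by (cases "C = 0") (simp_all add: field_simps)
    ultimately show "(\<Prod>k\<in>{..<m}-{j}. (u - x k)) / (\<Prod>k\<in>{..<m}-{j}. (x j - x k)) / (\<Prod>k<m. (u - x k))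
       = (1 / (\<Prod>k\<in>{..<m}-{j}. (x j - x k))) * (1 / (u - x j))"
      by metis
  qed
  finally show ?thesis .
qed

definition CI :: "(complex \<Rightarrow> complex) \<Rightarrow> complex \<Rightarrow> real \<Rightarrow> nat \<Rightarrow> (nat \<Rightarrow> nat) \<Rightarrow> (nat \<Rightarrow> complex) \<Rightarrow> complex" where
  "CI g c R m e x = contour_integral (circlepath c R) (\<lambda>u. g u / (\<Prod>k<m. (u - x k) ^ e k))"

lemma CI_cong:
  assumes "\<And>k. k < m \<Longrightarrow> e k = e' k"
  shows "CI g c R m e x = CI g c R m e' x"
  unfolding CI_def using assms by (intro arg_cong[where f="contour_integral _"] ext) (auto intro!: prod.cong)

lemma sphere_not_in_ball:
  assumes "y \<in> ball c R" "u \<in> sphere c R"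
  shows "u \<noteq> y"
  using assms by auto

lemma divdiff_CI:
  assumes g: "g holomorphic_on UNIV" and inj: "inj_on x {..<m}" and xb: "\<forall>k<m. x k \<in> ball c R"
  shows "divdiff g m x = CI g c R m (\<lambda>_. 1) x / (2 * pi * \<i>)"
proof (cases "m = 0")
  case True
  have "((\<lambda>u. g u / (\<Prod>k<m. (u - x k) ^ 1)) has_contour_integral 0) (circlepath c R)"
    using True g by (intro Cauchy_theorem_convex_simple[where S=UNIV]) auto
  then show ?thesis using True by (simp add: divdiff_def CI_def contour_integral_unique)
next
  case False
  then have m: "m > 0" by simp
  then have "x 0 \<in> ball c R" using xb by auto
  then have R: "R > 0" by (metis ball_eq_empty empty_iff not_le)
  define cc where "cc j = 1 / (\<Prod>k\<in>{..<m}-{j}. (x j - x k))" for j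
  have h: "((\<lambda>u. \<Sum>j<m. cc j * (g u / (u - x j))) has_contour_integral (\<Sum>j<m. cc j * (2 * of_real pi * \<i> * g (x j)))) (circlepath c R)"
  proof (intro has_contour_integral_sum has_contour_integral_lmul Cauchy_integral_circlepath_simple)
    fix j assume "j \<in> {..<m}"
    then show "norm (x j - c) < R" using xb by (auto simp: dist_norm norm_minus_commute)
  qed (use g holomorphic_on_subset in auto)
  have h2: "((\<lambda>u. g u / (\<Prod>k<m. (u - x k) ^ 1)) has_contour_integral (\<Sum>j<m. cc j * (2 * of_real pi * \<i> * g (x j)))) (circlepath c R)"
  proof (rule has_contour_integral_eq[OF h])
    fix u assume u: "u \<in> path_image (circlepath c R)"
    have "\<forall>k<m. u \<noteq> x k" using u xb R by auto
    from partial_frac[OF inj m this]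
    have "g u / (\<Prod>k<m. (u - x k)) = g u * (\<Sum>j<m. cc j * (1 / (u - x j)))"
      unfolding cc_def by (metis times_divide_eq_right mult_1_right)
    also have "\<dots> = (\<Sum>j<m. cc j * (g u / (u - x j)))"
      by (simp add: sum_distrib_left field_simps)
    finally show "(\<Sum>j<m. cc j * (g u / (u - x j))) = g u / (\<Prod>k<m. (u - x k) ^ 1)" by simp
  qed
  have "CI g c R m (\<lambda>_. 1) x = (\<Sum>j<m. cc j * (2 * of_real pi * \<i> * g (x j)))"
    unfolding CI_def using h2 by (rule contour_integral_unique)
  also have "\<dots> = 2 * pi * \<i> * divdiff g m x"
    by (simp add: divdiff_def cc_def sum_distrib_left field_simps)
  finally show ?thesis by simp
qed

lemma cpartial_CI:
  assumes g: "g holomorphic_on UNIV" and xb: "\<forall>k<m. x k \<in> ball c R" and j: "j < m" and ej: "e j \<noteq> 0"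
  shows "((\<lambda>z. CI g c R m e (x(j:=z))) has_field_derivative (of_nat (e j) * CI g c R m (e(j := Suc (e j))) x)) (at (x j))"
proof -
  define f where "f u = g u / (\<Prod>k\<in>{..<m}-{j}. (u - x k) ^ e k)" for u
  have prodeq: "(\<Prod>k<m. (u - (x(j:=z)) k) ^ e' k) = (u - z) ^ e' j * (\<Prod>k\<in>{..<m}-{j}. (u - x k) ^ e' k)" for u z e'
    using j by (subst prod.remove[of _ j]) (auto intro!: prod.cong)
  have feq: "g u / (\<Prod>k<m. (u - (x(j:=z)) k) ^ e' k) = f u / (u - z) ^ e' j" if "e' = e \<or> e' = e(j := Suc (e j))" for u z e'
    unfolding prodeq f_def using that by auto
  have xj: "x j \<in> ball c R" using xb j by auto
  have contf: "continuous_on (path_image (circlepath c R)) f"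
    unfolding f_def
    by (intro continuous_intros holomorphic_on_imp_continuous_on[OF holomorphic_on_subset[OF g]])
       (use xb sphere_not_in_ball in auto)
  have int: "((\<lambda>u. f u / (u - w) ^ e j) has_contour_integral CI g c R m e (x(j:=w))) (circlepath c R)"
    if w: "w \<in> ball c R" for w
  proof -
    have "(\<lambda>u. f u / (u - w) ^ e j) contour_integrable_on (circlepath c R)"
      by (intro contour_integrable_continuous_circlepath continuous_intros contf)
         (use w sphere_not_in_ball in auto)
    then show ?thesis
      unfolding CI_def using feq[of e] by (simp add: has_contour_integral_integral)
  qed
  from Cauchy_next_derivative_circlepath(2)[OF contf int ej xj]
  show ?thesis
    unfolding CI_def using feq[of "e(j := Suc (e j))" _ "x j"] by (simp add: fun_upd_idem)
qed

definition Sset :: "complex \<Rightarrow> real \<Rightarrow> nat \<Rightarrow> (nat \<Rightarrow> complex) set" where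
  "Sset c R m = {x. inj_on x {..<m} \<and> (\<forall>k<m. x k \<in> ball c R)}"

lemma S_nhds:
  assumes x: "x \<in> Sset c R m" and j: "j < m"
  shows "eventually (\<lambda>z. x(j:=z) \<in> Sset c R m) (nhds (x j))"
proof -
  define V where "V = ball c R - x ` ({..<m}-{j})"
  have "open V" unfolding V_def by (intro open_Diff finite_imp_closed) auto
  moreover have "x j \<in> V" using x j unfolding V_def Sset_def by (auto simp: inj_on_def)
  moreover have "x(j:=z) \<in> Sset c R m" if "z \<in> V" for z
    using that x j unfolding V_def Sset_def by (auto simp: inj_on_def) 
  ultimately show ?thesis unfolding eventually_nhds by blast
qed

lemma cpartial_cong:
  assumes "\<forall>y\<in>Sset c R m. H y = K y" "x \<in> Sset c R m" "j < m"
  shows "cpartial j H x = cpartial j K x"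
  unfolding cpartial_def
  by (rule deriv_cong_ev[OF eventually_mono[OF S_nhds[OF assms(2,3)]]]) (use assms(1) in auto)

lemma cpartial_pow_cong:
  assumes "\<forall>y\<in>Sset c R m. H y = K y" "j < m"
  shows "\<forall>y\<in>Sset c R m. (cpartial j ^^ s) H y = (cpartial j ^^ s) K y"
proof (induction s)
  case 0 then show ?case using assms by simp
next
  case (Suc s) then show ?case using assms(2) by (auto intro: cpartial_cong)
qed

lemma cpartial_pow_CI:
  assumes g: "g holomorphic_on UNIV" and H: "\<forall>y\<in>Sset c R m. H y = C * CI g c R m e y"
    and j: "j < m" and ej: "e j = 1"
  shows "\<forall>y\<in>Sset c R m. (cpartial j ^^ s) H y = C * of_nat (fact s) * CI g c R m (e(j := Suc s)) y"
proof (induction s)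
  case 0 then show ?case using H ej by (simp add: fun_upd_idem)
next
  case (Suc s)
  show ?case
  proof
    fix y assume y: "y \<in> Sset c R m"
    have "(cpartial j ^^ Suc s) H y = cpartial j ((cpartial j ^^ s) H) y" by simp
    also have "\<dots> = cpartial j (\<lambda>y. C * of_nat (fact s) * CI g c R m (e(j := Suc s)) y) y"
      by (rule cpartial_cong[OF Suc.IH y j])
    also have "\<dots> = C * of_nat (fact s) * (of_nat (Suc s) * CI g c R m (e(j := Suc (Suc s))) y)"
    proof -
      have yb: "\<forall>k<m. y k \<in> ball c R" using y by (simp add: Sset_def)
      from DERIV_cmult[OF cpartial_CI[OF g yb j, of "e(j := Suc s)"], of "C * of_nat (fact s)"]
      show ?thesis unfolding cpartial_def by (intro DERIV_imp_deriv) simp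
    qed
    also have "\<dots> = C * of_nat (fact (Suc s)) * CI g c R m (e(j := Suc (Suc s))) y"
      by (simp add: algebra_simps)
    finally show "(cpartial j ^^ Suc s) H y = C * of_nat (fact (Suc s)) * CI g c R m (e(j := Suc (Suc s))) y" .
  qed
qed

lemma fold_CI:
  assumes g: "g holomorphic_on UNIV" and n: "n \<le> m"
  shows "\<forall>x\<in>Sset c R m. fold (\<lambda>j H. (cpartial j ^^ r j) H) [0..<n] (divdiff g m) x
      = (\<Prod>i<n. of_nat (fact (r i))) / (2 * pi * \<i>) * CI g c R m (\<lambda>i. if i < n then Suc (r i) else 1) x"
  using n
proof (induction n)
  case 0
  then show ?case using divdiff_CI[OF g] by (auto simp: Sset_def)
next
  case (Suc n)
  let ?e = "\<lambda>i. if i < n then Suc (r i) else 1"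
  have eq: "fold (\<lambda>j H. (cpartial j ^^ r j) H) [0..<Suc n] G = (cpartial n ^^ r n) (fold (\<lambda>j H. (cpartial j ^^ r j) H) [0..<n] G)" for G
    by simp
  have "\<forall>y\<in>Sset c R m. (cpartial n ^^ r n) (fold (\<lambda>j H. (cpartial j ^^ r j) H) [0..<n] (divdiff g m)) y
     = (\<Prod>i<n. of_nat (fact (r i))) / (2 * pi * \<i>) * of_nat (fact (r n)) * CI g c R m (?e(n := Suc (r n))) y"
    by (rule cpartial_pow_CI[OF g]) (use Suc in auto)
  moreover have "?e(n := Suc (r n)) = (\<lambda>i. if i < Suc n then Suc (r i) else 1)" by auto
  ultimately show ?case unfolding eq by (simp add: algebra_simps)
qed

lemma conf_divdiff_CI:
  assumes g: "g holomorphic_on UNIV" and inj: "inj_on x {..<m}" and xb: "\<forall>k<m. x k \<in> ball c R"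
  shows "conf_divdiff g m x r = CI g c R m (\<lambda>i. Suc (r i)) x / (2 * pi * \<i>)"
proof -
  have xS: "x \<in> Sset c R m" using inj xb by (simp add: Sset_def)
  have nz: "(\<Prod>i<m. of_nat (fact (r i)) :: complex) \<noteq> 0" by simp
  have "mixed_partial r m (divdiff g m) x = (\<Prod>i<m. of_nat (fact (r i))) / (2 * pi * \<i>) * CI g c R m (\<lambda>i. if i < m then Suc (r i) else 1) x"
    using fold_CI[OF g order.refl, where r=r and c=c and R=R] xS unfolding mixed_partial_def by auto
  also have "CI g c R m (\<lambda>i. if i < m then Suc (r i) else 1) x = CI g c R m (\<lambda>i. Suc (r i)) x"
    by (rule CI_cong) simp
  finally show ?thesis unfolding conf_divdiff_def using nz by (simp add: field_simps)
qed



lemma poly_norm_bound: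
  fixes P :: "complex poly"
  assumes "1 \<le> norm u" "degree P \<le> D"
  shows "norm (poly P u) \<le> (\<Sum>i\<le>degree P. norm (coeff P i)) * norm u ^ D"
proof -
  have "norm (poly P u) \<le> (\<Sum>i\<le>degree P. norm (coeff P i * u ^ i))"
    unfolding poly_altdef by (rule norm_sum)
  also have "\<dots> \<le> (\<Sum>i\<le>degree P. norm (coeff P i) * norm u ^ D)"
    using assms by (intro sum_mono) (auto simp: norm_mult norm_power intro!: mult_left_mono power_increasing)
  also have "\<dots> = (\<Sum>i\<le>degree P. norm (coeff P i)) * norm u ^ D"
    by (simp add: sum_distrib_right)
  finally show ?thesis .
qed

lemma power_ratio_identity:
  fixes r :: real
  assumes "r > 0" "d \<ge> 1"
  shows "(2 * r) ^ (d - 1) / ((r / 2) ^ d * (r / 2)) = 4 ^ d / r^2"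
proof -
  obtain d' where d: "d = Suc d'" using assms(2) by (cases d) auto
  show ?thesis using assms(1) unfolding d
    by (simp add: field_simps power_mult_distrib power_divide power2_eq_square)
      (simp add: power_mult_distrib[symmetric] mult.commute)
qed

lemma circle_segment_norm:
  assumes "z \<in> closed_segment (circlepath c R t) (circlepath c r t)" "0 \<le> R" "R \<le> r"
  shows "norm (z - c) \<ge> R"
proof -
  define e where "e = exp (2 * of_real pi * \<i> * of_real t)"
  have ne: "norm e = 1" unfolding e_def by (simp add: norm_exp_eq_Re)
  obtain v where v: "0 \<le> v" "v \<le> 1" "z = (1 - v) *\<^sub>R (c + R * e) + v *\<^sub>R (c + r * e)"
    using assms(1) unfolding closed_segment_def circlepath e_def by auto
  have "z - c = of_real ((1 - v) * R + v * r) * e"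
    using v(3) by (simp add: scaleR_conv_of_real algebra_simps)
  then have "norm (z - c) = norm (complex_of_real ((1 - v) * R + v * r)) * norm e" by (simp only: norm_mult)
  then have "norm (z - c) = \<bar>(1 - v) * R + v * r\<bar>" using ne by (simp only: norm_of_real mult_1_right)
  also have "\<dots> = (1 - v) * R + v * r" using v assms by (intro abs_of_nonneg) (auto intro!: add_nonneg_nonneg mult_nonneg_nonneg)
  also have "\<dots> \<ge> R" using mult_left_mono[OF assms(3) v(1)] by (simp add: algebra_simps)
  finally show ?thesis .
qed

lemma key_residue:
  fixes Q Pc :: "complex poly" and \<alpha> :: "nat \<Rightarrow> complex" and b :: "nat \<Rightarrow> nat" and c N :: complex and R :: real
  assumes Pc: "Pc = (\<Prod>j<m. [:- \<alpha> j, 1:] ^ b j)"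
    and deg: "degree Q < degree Pc"
    and \<alpha>in: "\<forall>j<m. \<alpha> j \<in> ball c R" and N: "norm (N - c) > R" and R: "R > 0"
  shows "contour_integral (circlepath c R) (\<lambda>u. poly Q u / (poly Pc u * (N - u))) = 2 * pi * \<i> * (poly Q N / poly Pc N)"
proof -
  define d where "d = degree Pc"
  have Pc_eval: "poly Pc u = (\<Prod>j<m. (u - \<alpha> j) ^ b j)" for u
    by (simp add: Pc poly_prod)
  have Pc_nz: "poly Pc u \<noteq> 0" if "\<forall>j<m. u \<noteq> \<alpha> j" for u
    unfolding Pc_eval using that by auto
  have far: "u \<noteq> \<alpha> j" if "norm (u - c) \<ge> R" "j < m" for u j
    using that \<alpha>in by (auto simp: dist_norm norm_minus_commute)
  have degd: "d = (\<Sum>j<m. b j)"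
    unfolding d_def Pc by (subst degree_prod_eq_sum_degree) (auto simp: degree_linear_power)
  have d1: "d \<ge> 1" using deg d_def by simp
  have PcN: "poly Pc N \<noteq> 0" using N far Pc_nz by (meson less_imp_le)
  define K where "K = poly Q N / poly Pc N"
  have "poly (Q - smult K Pc) N = 0" using PcN by (simp add: K_def)
  then obtain s where s: "Q - smult K Pc = [:-N, 1:] * s"
    by (metis dvdE poly_eq_0_iff_dvd)
  have hs: "poly Q u - K * poly Pc u = (u - N) * poly s u" for u
    using arg_cong[OF s, of "\<lambda>P. poly P u"] by (simp add: algebra_simps)
  define T where "T u = - poly s u / poly Pc u - K / (u - c)" for u
  define h where "h u = poly Q u / (poly Pc u * (N - u))" for u
  have hT: "h u = T u + K / (u - c) + K / (N - u)" if "u \<noteq> N" "poly Pc u \<noteq> 0" "u \<noteq> c" for u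
  proof -
    have "poly Q u = K * poly Pc u + (u - N) * poly s u" using hs[of u] by (simp add: algebra_simps)
    have Nu: "N - u \<noteq> 0" using that by simp
    have "h u = (K * poly Pc u + (u - N) * poly s u) / (poly Pc u * (N - u))"
      unfolding h_def using \<open>poly Q u = _\<close> by simp
    also have "\<dots> = K / (N - u) - poly s u / poly Pc u"
      using Nu that(2) by (simp add: field_simps)
    finally show ?thesis unfolding T_def by simp
  qed
  define \<Omega> where "\<Omega> = - insert c (\<alpha> ` {..<m})"
  have open\<Omega>: "open \<Omega>" unfolding \<Omega>_def by (intro open_Compl finite_imp_closed) auto
  have holT: "T holomorphic_on \<Omega>"
    unfolding T_def \<Omega>_def by (intro holomorphic_intros) (auto intro!: Pc_nz)
  have sph: "norm (u - c) \<ge> R \<Longrightarrow> u \<in> \<Omega>" for u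
    unfolding \<Omega>_def using far R by auto
  have Tint: "(T has_contour_integral contour_integral (circlepath c r) T) (circlepath c r)" if "r \<ge> R" for r
  proof -
    have "continuous_on (path_image (circlepath c r)) T"
      using that R by (intro holomorphic_on_imp_continuous_on holomorphic_on_subset[OF holT])
        (auto intro!: sph simp: dist_norm norm_minus_commute)
    then show ?thesis by (intro has_contour_integral_integral contour_integrable_continuous_circlepath)
  qed
  define IT where "IT = contour_integral (circlepath c R) T"
  have homo: "contour_integral (circlepath c r) T = IT" if r: "r \<ge> R" for r
  proof -
    have "homotopic_loops \<Omega> (circlepath c R) (circlepath c r)"
    proof (rule homotopic_loops_linear)
      fix t x assume "t \<in> {0..1::real}"
      show "closed_segment (circlepath c R t) (circlepath c r t) \<subseteq> \<Omega>"
        using circle_segment_norm[of _ c R t r] r R sph by auto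
    qed auto
    from Cauchy_theorem_homotopic_loops[OF this open\<Omega> holT]
    show ?thesis unfolding IT_def by simp
  qed
  define A where "A = (\<Sum>i\<le>degree Q. norm (coeff Q i))"
  define C where "C = A * 4 ^ d + 2 * norm K * norm (N - c)"
  have A0: "A \<ge> 0" unfolding A_def by (intro sum_nonneg) auto
  have C0: "C \<ge> 0" unfolding C_def using A0 by auto
  define r0 where "r0 = max (2 * R) (max (2 * norm (N - c)) (norm c + 1))"
  have Tbound: "norm (T u) \<le> C / r^2" if r: "r \<ge> r0" and u: "norm (u - c) = r" for r u
  proof -
    have rpos: "r > 0" using r R unfolding r0_def by auto
    have rR: "r \<ge> R" using r R unfolding r0_def by auto
    have nu1: "norm u \<le> 2 * r"
      using norm_triangle_ineq[of "u - c" c] u r unfolding r0_def by auto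
    have nu2: "norm u \<ge> 1"
      using norm_triangle_ineq4[of u c] u r unfolding r0_def by auto
    have uN: "norm (N - u) \<ge> r / 2"
      using norm_triangle_ineq2[of "u - c" "N - c"] u r unfolding r0_def
      by (auto simp: norm_minus_commute algebra_simps)
    have ua: "norm (u - \<alpha> j) \<ge> r / 2" if j: "j < m" for j
    proof -
      have "norm (\<alpha> j - c) < R" using \<alpha>in j by (auto simp: dist_norm norm_minus_commute)
      then show ?thesis
        using norm_triangle_ineq2[of "u - c" "\<alpha> j - c"] u r unfolding r0_def by auto
    qed
    have Pcb: "norm (poly Pc u) \<ge> (r / 2) ^ d"
    proof -
      have "(r / 2) ^ d = (\<Prod>j<m. (r / 2) ^ b j)" unfolding degd by (simp add: power_sum)
      also have "\<dots> \<le> (\<Prod>j<m. norm (u - \<alpha> j) ^ b j)"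
        using ua rpos by (intro prod_mono) (auto intro!: power_mono)
      also have "\<dots> = norm (poly Pc u)" by (simp add: Pc_eval prod_norm[symmetric] norm_power)
      finally show ?thesis .
    qed
    have Qb: "norm (poly Q u) \<le> A * (2 * r) ^ (d - 1)"
    proof -
      have "norm (poly Q u) \<le> A * norm u ^ (d - 1)"
        unfolding A_def using nu2 deg d_def by (intro poly_norm_bound) auto
      also have "\<dots> \<le> A * (2 * r) ^ (d - 1)"
        using A0 nu1 by (intro mult_left_mono power_mono) auto
      finally show ?thesis .
    qed
    have uNne: "u \<noteq> N" using uN rpos by auto
    have uc: "u \<noteq> c" using u rpos by auto
    have "(r / 2) ^ d > 0" using rpos by simp
    then have Pcu: "poly Pc u \<noteq> 0" using Pcb by auto
    have hb: "norm (h u) \<le> A * 4 ^ d / r^2"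
    proof -
      have "norm (h u) = norm (poly Q u) / (norm (poly Pc u) * norm (N - u))"
        unfolding h_def by (simp add: norm_divide norm_mult)
      also have "\<dots> \<le> A * (2 * r) ^ (d - 1) / ((r / 2) ^ d * (r / 2))"
        using Qb Pcb uN rpos A0 by (intro frac_le mult_mono mult_pos_pos) auto
      also have "\<dots> = A * ((2 * r) ^ (d - 1) / ((r / 2) ^ d * (r / 2)))" by simp
      also have "\<dots> = A * 4 ^ d / r^2" using power_ratio_identity[OF rpos d1] by simp
      finally show ?thesis .
    qed
    have kb: "norm (K / (u - c) + K / (N - u)) \<le> 2 * norm K * norm (N - c) / r^2"
    proof -
      have "K / (u - c) + K / (N - u) = K * (N - c) / ((u - c) * (N - u))"
        using uNne uc by (simp add: field_simps)
      then have "norm (K / (u - c) + K / (N - u)) = norm K * norm (N - c) / (r * norm (N - u))"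
        using u by (simp add: norm_divide norm_mult)
      also have "\<dots> \<le> norm K * norm (N - c) / (r * (r / 2))"
        using uN rpos by (intro divide_left_mono mult_left_mono mult_pos_pos) auto
      also have "\<dots> = 2 * norm K * norm (N - c) / r^2" by (simp add: power2_eq_square field_simps)
      finally show ?thesis .
    qed
    have "T u = h u - (K / (u - c) + K / (N - u))" using hT[OF uNne Pcu uc] by simp
    then have "norm (T u) \<le> norm (h u) + norm (K / (u - c) + K / (N - u))"
      by (simp add: norm_triangle_ineq4)
    also have "\<dots> \<le> A * 4 ^ d / r^2 + 2 * norm K * norm (N - c) / r^2" using hb kb by simp
    also have "\<dots> = C / r^2" unfolding C_def by (simp add: add_divide_distrib)
    finally show ?thesis .
  qed
  have IT0: "IT = 0"
  proof (rule ccontr)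
    assume ne: "IT \<noteq> 0"
    define r where "r = max r0 (4 * pi * C / norm IT + 1)"
    have rr0: "r \<ge> r0" unfolding r_def by simp
    have rpos: "r > 0" using R unfolding r_def r0_def by auto
    have "norm IT \<le> C / r^2 * (2 * pi * r)"
      using has_contour_integral_bound_circlepath[OF Tint[of r] _ rpos, of "C / r^2"] Tbound[OF rr0] homo[of r]
        rr0 R C0 unfolding r0_def by auto
    also have "\<dots> = 2 * pi * C / r" using rpos by (simp add: power2_eq_square field_simps)
    also have "\<dots> < norm IT"
    proof -
      have "4 * pi * C / norm IT < r" unfolding r_def by simp
      then have "4 * pi * C < r * norm IT" using ne by (simp add: divide_less_eq)
      moreover have "2 * pi * C \<le> 4 * pi * C" using C0 pi_gt_zero by (intro mult_right_mono) auto
      ultimately have "2 * pi * C < norm IT * r" by (simp add: mult.commute)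
      then show ?thesis using rpos by (simp add: divide_less_eq)
    qed
    finally show False by simp
  qed
  have i1: "((\<lambda>u. K / (u - c)) has_contour_integral (2 * of_real pi * \<i> * K)) (circlepath c R)"
    using Cauchy_integral_circlepath_simple[of "\<lambda>_. K" c R c] R by simp
  have i2: "((\<lambda>u. K / (N - u)) has_contour_integral 0) (circlepath c R)"
  proof (rule Cauchy_theorem_convex_simple[where S = "ball c (norm (N - c))"])
    show "(\<lambda>u. K / (N - u)) holomorphic_on ball c (norm (N - c))"
      by (intro holomorphic_intros) (auto simp: dist_norm norm_minus_commute)
    show "path_image (circlepath c R) \<subseteq> ball c (norm (N - c))"
      using N R by (auto simp: dist_norm norm_minus_commute)
  qed auto
  have "(h has_contour_integral (IT + 2 * of_real pi * \<i> * K + 0)) (circlepath c R)"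
  proof (rule has_contour_integral_eq[OF has_contour_integral_add[OF has_contour_integral_add[OF Tint[OF order.refl, folded IT_def] i1] i2]])
    fix u assume u: "u \<in> path_image (circlepath c R)"
    then have nu: "norm (u - c) = R" using R by (auto simp: dist_norm norm_minus_commute)
    have "u \<noteq> N" using nu N by auto
    moreover have "poly Pc u \<noteq> 0" using nu far Pc_nz by auto
    moreover have "u \<noteq> c" using nu R by auto
    ultimately show "T u + K / (u - c) + K / (N - u) = h u" using hT by simp
  qed
  then have "contour_integral (circlepath c R) h = 2 * of_real pi * \<i> * K"
    using IT0 IT_def by (simp add: contour_integral_unique)
  then show ?thesis unfolding h_def K_def by simp
qed



lemma circ_in_sphere: "circlepath c R s \<in> sphere c \<bar>R\<bar>"
  by (simp add: circlepath dist_norm norm_mult norm_exp_eq_Re)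

lemma contour_as_integral:
  "contour_integral (circlepath c R) G = integral (cbox 0 1) (\<lambda>s. G (circlepath c R s) * (2 * pi * \<i> * R * exp (2 * of_real pi * \<i> * s)))"
  unfolding contour_integral_integral vector_derivative_circlepath by simp

lemma cE_cont: "continuous_on (U \<times> cbox 0 1) (\<lambda>z::real\<times>real. 2 * pi * \<i> * R * exp (2 * of_real pi * \<i> * of_real (snd z)))"
proof -
  have cE: "continuous_on UNIV (\<lambda>s::real. 2 * pi * \<i> * R * exp (2 * of_real pi * \<i> * of_real s))"
    by (intro continuous_intros)
  show ?thesis by (rule continuous_on_compose2[OF cE continuous_on_snd]) auto
qed

lemma contour_param_cont:
  fixes G :: "real \<Rightarrow> complex \<Rightarrow> complex"
  assumes cont: "continuous_on (U \<times> sphere c R) (\<lambda>z. G (fst z) (snd z))" and R: "R \<ge> 0"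
  shows "continuous_on U (\<lambda>t. contour_integral (circlepath c R) (G t))"
proof -
  have c1: "continuous_on (U \<times> cbox 0 1) (\<lambda>z. (fst z, circlepath c R (snd z)))"
    unfolding circlepath by (intro continuous_intros)
  have c2: "(\<lambda>z. (fst z, circlepath c R (snd z))) ` (U \<times> cbox 0 1) \<subseteq> U \<times> sphere c R"
    using circ_in_sphere[of c R] R by auto
  have "continuous_on (U \<times> cbox 0 1) (\<lambda>z. G (fst z) (circlepath c R (snd z)))"
    using continuous_on_compose[OF c1 continuous_on_subset[OF cont c2]] by (simp add: o_def)
  then have "continuous_on (U \<times> cbox 0 1) (\<lambda>(t, s). G t (circlepath c R s) * (2 * pi * \<i> * R * exp (2 * of_real pi * \<i> * s)))"
    unfolding case_prod_beta by (rule continuous_on_mult[OF _ cE_cont])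
  from integral_continuous_on_param[OF this]
  show ?thesis unfolding contour_as_integral .
qed

lemma contour_param_deriv:
  fixes G G' :: "real \<Rightarrow> complex \<Rightarrow> complex"
  assumes der: "\<And>t u. t \<in> U \<Longrightarrow> u \<in> sphere c R \<Longrightarrow> ((\<lambda>t. G t u) has_vector_derivative G' t u) (at t within U)"
    and cont: "continuous_on (U \<times> sphere c R) (\<lambda>z. G (fst z) (snd z))"
    and cont': "continuous_on (U \<times> sphere c R) (\<lambda>z. G' (fst z) (snd z))"
    and t0: "t0 \<in> U" and U: "convex U" and R: "R \<ge> 0"
  shows "((\<lambda>t. contour_integral (circlepath c R) (G t)) has_vector_derivative contour_integral (circlepath c R) (G' t0)) (at t0 within U)"
proof -
  have c1: "continuous_on (U \<times> cbox 0 1) (\<lambda>z. (fst z, circlepath c R (snd z)))"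
    unfolding circlepath by (intro continuous_intros)
  have c2: "(\<lambda>z. (fst z, circlepath c R (snd z))) ` (U \<times> cbox 0 1) \<subseteq> U \<times> sphere c R"
    using circ_in_sphere[of c R] R by auto
  have "continuous_on (U \<times> cbox 0 1) (\<lambda>z. G' (fst z) (circlepath c R (snd z)))"
    using continuous_on_compose[OF c1 continuous_on_subset[OF cont' c2]] by (simp add: o_def)
  then have cfx: "continuous_on (U \<times> cbox 0 1) (\<lambda>(t, s). G' t (circlepath c R s) * (2 * pi * \<i> * R * exp (2 * of_real pi * \<i> * s)))"
    unfolding case_prod_beta by (rule continuous_on_mult[OF _ cE_cont])
  have "continuous_on (U \<times> cbox 0 1) (\<lambda>z. G (fst z) (circlepath c R (snd z)))"
    using continuous_on_compose[OF c1 continuous_on_subset[OF cont c2]] by (simp add: o_def)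
  then have cf: "continuous_on (U \<times> cbox 0 1) (\<lambda>z. G (fst z) (circlepath c R (snd z)) * (2 * pi * \<i> * R * exp (2 * of_real pi * \<i> * of_real (snd z))))"
    by (rule continuous_on_mult[OF _ cE_cont])
  have int: "(\<lambda>s. G t (circlepath c R s) * (2 * pi * \<i> * R * exp (2 * of_real pi * \<i> * s))) integrable_on cbox 0 1"
    if t: "t \<in> U" for t
  proof -
    have "continuous_on {0..1} (\<lambda>s. G t (circlepath c R s) * (2 * pi * \<i> * R * exp (2 * of_real pi * \<i> * s)))"
      using continuous_on_compose[OF continuous_on_Pair[OF continuous_on_const continuous_on_id, of "{0..1}" t] 
            continuous_on_subset[OF cf, of "Pair t ` {0..1}"]] t by (auto simp: o_def)
    then show ?thesis by (simp add: integrable_continuous_interval)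
  qed
  show ?thesis unfolding contour_as_integral
    by (rule leibniz_rule_vector_derivative[OF _ int cfx t0 U])
       (auto intro!: has_vector_derivative_mult_left der circ_in_sphere[of c R, simplified abs_of_nonneg[OF R]] simp: R)
qed



lemma circle_exists:
  fixes \<alpha> :: "nat \<Rightarrow> complex"
  assumes neg: "\<forall>j<m. Re (\<alpha> j) < 0"
  shows "\<exists>c R. R > 0 \<and> c + R < 0 \<and> (\<forall>j<m. \<alpha> j \<in> ball (complex_of_real c) R)"
proof (cases "m = 0")
  case True then show ?thesis by (intro exI[of _ "-2"] exI[of _ 1]) auto
next
  case False
  define \<delta> where "\<delta> = Min ((\<lambda>j. - Re (\<alpha> j)) ` {..<m})"
  have \<delta>pos: "\<delta> > 0" unfolding \<delta>_def using False neg by (subst Min_gr_iff) auto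
  have \<delta>le: "\<delta> \<le> - Re (\<alpha> j)" if "j < m" for j unfolding \<delta>_def using that by (intro Min_le) auto
  define M where "M = (\<Sum>j<m. norm (\<alpha> j))"
  have Mge: "norm (\<alpha> j) \<le> M" if "j < m" for j
    unfolding M_def using that by (intro member_le_sum) auto
  define R where "R = (M^2 + \<delta>^2) / \<delta> + M + 1"
  define c where "c = - (R + \<delta> / 2)"
  have M0: "M \<ge> 0" unfolding M_def by (intro sum_nonneg) auto
  have RM: "R \<ge> M + 1" unfolding R_def using \<delta>pos by (simp add: field_simps)
  have Rd: "R * \<delta> \<ge> M^2 + \<delta>^2"
  proof -
    have "R * \<delta> = M^2 + \<delta>^2 + (M + 1) * \<delta>" unfolding R_def using \<delta>pos by (simp add: field_simps)
    then show ?thesis using M0 \<delta>pos by (simp add: add_nonneg_nonneg)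
  qed
  have "\<alpha> j \<in> ball (complex_of_real c) R" if j: "j < m" for j
  proof -
    define x where "x = Re (\<alpha> j) - c"
    have a1: "\<bar>Re (\<alpha> j)\<bar> \<le> M" "\<bar>Im (\<alpha> j)\<bar> \<le> M"
      using abs_Re_le_cmod[of "\<alpha> j"] abs_Im_le_cmod[of "\<alpha> j"] Mge[OF j] by auto
    have x0: "0 \<le> x" unfolding x_def c_def using a1 RM \<delta>pos by auto
    have x1: "x \<le> R - \<delta> / 2" unfolding x_def c_def using \<delta>le[OF j] by auto
    have "x^2 \<le> (R - \<delta> / 2)^2" using x0 x1 by (intro power_mono) auto
    moreover have "(Im (\<alpha> j))^2 \<le> M^2" using a1(2) by (metis abs_ge_zero power2_abs power_mono)
    moreover have "(R - \<delta> / 2)^2 = R^2 - R * \<delta> + \<delta>^2 / 4" by (simp add: power2_eq_square algebra_simps)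
    moreover have "norm (\<alpha> j - complex_of_real c) ^ 2 = x^2 + (Im (\<alpha> j))^2"
      unfolding x_def by (simp add: cmod_power2)
    moreover have "\<delta>^2 > 0" using \<delta>pos by simp
    ultimately have "norm (\<alpha> j - complex_of_real c) ^ 2 < R ^ 2" using Rd by linarith
    moreover have R0: "0 \<le> R" using RM M0 by linarith
    ultimately have "norm (\<alpha> j - complex_of_real c) < R" by (rule power2_less_imp_less)
    then show ?thesis by (simp add: dist_norm norm_minus_commute)
  qed
  moreover have "R > 0" using RM M0 by simp
  moreover have "c + R < 0" unfolding c_def using \<delta>pos by simp
  ultimately show ?thesis by blast
qed

lemma powr_set_integrable:
  fixes a C :: real
  assumes "a > -1"
  shows "set_integrable lborel {0<..1} (\<lambda>t. C * t powr a)"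
proof -
  have "(\<lambda>t. t powr a) integrable_on {0<..1}"
    by (rule integrable_on_powr_from_0') (use assms in auto)
  hence "(\<lambda>t. t powr a) absolutely_integrable_on {0<..1}"
    by (subst absolutely_integrable_on_iff_nonneg) auto
  from integrable_mult_right[OF this [unfolded set_integrable_def], of C]
  show ?thesis unfolding set_integrable_def
    by (subst (asm) integrable_completion) (auto simp: mult_ac intro!: borel_measurable_continuous_on_indicator continuous_intros)
qed

lemma cont_bound_sphere:
  fixes f :: "complex \<Rightarrow> complex"
  assumes "continuous_on (sphere z r) f"
  shows "\<exists>B\<ge>0. \<forall>u\<in>sphere z r. norm (f u) \<le> B"
proof -
  have "compact (f ` sphere z r)" by (intro compact_continuous_image assms) auto
  then obtain B where "B > 0" "\<forall>x\<in>f ` sphere z r. norm x \<le> B"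
    using compact_imp_bounded bounded_pos by metis
  then show ?thesis by (intro exI[of _ B]) auto
qed

lemma poly_map_of_real: "poly (map_poly complex_of_real p) (complex_of_real x) = complex_of_real (poly p x)"
  by (induction p) (auto simp: map_poly_pCons)

lemma cnj_circlepath: "cnj \<circ> circlepath (complex_of_real c) R = reversepath (circlepath (complex_of_real c) R)"
proof
  fix s :: real
  have "exp (2 * complex_of_real pi * \<i> * complex_of_real (1 - s)) = exp (2 * complex_of_real pi * \<i>) * exp (- (2 * complex_of_real pi * \<i> * complex_of_real s))"
  proof -
    have "2 * complex_of_real pi * \<i> * complex_of_real (1 - s) = 2 * complex_of_real pi * \<i> + (- (2 * complex_of_real pi * \<i> * complex_of_real s))"
      by (simp add: algebra_simps)
    note eq = this
    show ?thesis by (subst eq) (rule exp_add)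
  qed
  also have "\<dots> = exp (- (2 * complex_of_real pi * \<i> * complex_of_real s))" by simp
  finally have e: "exp (2 * complex_of_real pi * \<i> * complex_of_real (1 - s)) = exp (- (2 * complex_of_real pi * \<i> * complex_of_real s))" .
  have e2: "cnj (exp (2 * complex_of_real pi * \<i> * complex_of_real s)) = exp (- (2 * complex_of_real pi * \<i> * complex_of_real s))"
      by (simp add: exp_cnj)
    show "(cnj \<circ> circlepath (complex_of_real c) R) s = reversepath (circlepath (complex_of_real c) R) s"
    unfolding reversepath_def circlepath o_def using e e2 by simp
qed

lemma real_contour:
  assumes "\<And>u. cnj (f (cnj u)) = f u"
  shows "cnj (contour_integral (circlepath (complex_of_real c) R) f) = - contour_integral (circlepath (complex_of_real c) R) f"
proof -
  have e: "cnj \<circ> f \<circ> cnj = f" by (rule ext) (simp only: o_def assms)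
  have "contour_integral (cnj \<circ> circlepath (complex_of_real c) R) f = cnj (contour_integral (circlepath (complex_of_real c) R) (cnj \<circ> f \<circ> cnj))"
    by (rule contour_integral_cnj[OF valid_path_circlepath])
  then have "contour_integral (reversepath (circlepath (complex_of_real c) R)) f = cnj (contour_integral (circlepath (complex_of_real c) R) f)"
    by (simp only: e cnj_circlepath)
  then show ?thesis by (simp add: contour_integral_reversepath)
qed



theorem mainTheorem2:
  fixes p q :: "real poly" and m :: nat and \<alpha> :: "nat \<Rightarrow> complex" and b :: "nat \<Rightarrow> nat"
    and w :: "real \<Rightarrow> complex"
  assumes distinct: "inj_on \<alpha> {..<m}"
    and neg: "\<forall>j<m. Re (\<alpha> j) < 0"
    and bpos: "\<forall>j<m. b j \<ge> 1"
    and p_def: "map_poly complex_of_real p = (\<Prod>j<m. [:- \<alpha> j, 1:] ^ b j)"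
    and deg: "q = 0 \<or> degree q < degree p"
    and coprime: "\<forall>z. poly (map_poly complex_of_real p) z = 0 \<longrightarrow> poly (map_poly complex_of_real q) z \<noteq> 0"
    and w_def: "\<And>t. w t = conf_divdiff
        (\<lambda>z. poly (map_poly complex_of_real q) z * exp ((- z - 1) * complex_of_real (ln t)))
        m \<alpha> (\<lambda>j. b j - 1)"
  shows "(\<forall>t\<in>{0<..1}. w t \<in> \<real>)
    \<and> continuous_on {0<..1} w
    \<and> set_integrable lborel {0<..(1::real)} w
    \<and> (\<forall>n::nat. complex_of_real (poly q (real n) / poly p (real n))
          = (LINT t:{0<..1}|lborel. complex_of_real (t ^ n) * w t))"
proof -
  define Pc where "Pc = map_poly complex_of_real p"
  define Q where "Q = map_poly complex_of_real q"
  obtain c R where R: "R > 0" and cR: "c + R < 0" and \<alpha>in0: "\<forall>j<m. \<alpha> j \<in> ball (complex_of_real c) R"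
    using circle_exists[OF neg] by blast
  define cc where "cc = complex_of_real c"
  have \<alpha>in: "\<forall>j<m. \<alpha> j \<in> ball cc R" using \<alpha>in0 cc_def by simp
  define \<sigma> where "\<sigma> = c + R"
  have \<sigma>: "\<sigma> < 0" using cR \<sigma>_def by simp
  define \<gamma> where "\<gamma> = circlepath cc R"
  define G where "G t u = poly Q u * exp ((- u - 1) * complex_of_real (ln t)) / poly Pc u" for t u
  have Pc_eval: "poly Pc u = (\<Prod>j<m. (u - \<alpha> j) ^ b j)" for u
    unfolding Pc_def p_def by (simp add: poly_prod)
  have sph_re: "Re u \<le> \<sigma>" if "u \<in> sphere cc R" for u
  proof -
    have "Re u - c = Re (u - cc)" by (simp add: cc_def)
    also have "\<dots> \<le> norm (u - cc)" by (rule complex_Re_le_cmod)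
    also have "\<dots> = R" using that by (simp add: dist_norm norm_minus_commute)
    finally show ?thesis unfolding \<sigma>_def by simp
  qed
  have sph_nz: "poly Pc u \<noteq> 0" if u: "u \<in> sphere cc R" for u
  proof -
    have "u \<noteq> \<alpha> j" if "j < m" for j using \<alpha>in that u by auto
    then show ?thesis unfolding Pc_eval by auto
  qed
  have sph_zero: "dist cc u \<noteq> R" if "poly Pc u = 0" for u
    using sph_nz[of u] that by auto
  have wform: "w t = contour_integral \<gamma> (G t) / (2 * pi * \<i>)" for t
  proof -
    have holo: "(\<lambda>z. poly Q z * exp ((- z - 1) * complex_of_real (ln t))) holomorphic_on UNIV"
      by (intro holomorphic_intros)
    have "w t = CI (\<lambda>z. poly Q z * exp ((- z - 1) * complex_of_real (ln t))) cc R m (\<lambda>i. Suc (b i - 1)) \<alpha> / (2 * pi * \<i>)"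
      unfolding w_def Q_def[symmetric] by (rule conf_divdiff_CI[OF holo distinct \<alpha>in])
    also have "CI (\<lambda>z. poly Q z * exp ((- z - 1) * complex_of_real (ln t))) cc R m (\<lambda>i. Suc (b i - 1)) \<alpha> = contour_integral \<gamma> (G t)"
      unfolding CI_def \<gamma>_def G_def Pc_eval
    proof (intro arg_cong[where f="contour_integral _"] ext arg_cong2[where f="(/)"] refl prod.cong)
      fix u x assume "x \<in> {..<m}"
      then have "Suc (b x - 1) = b x" using bpos by auto
      then show "(u - \<alpha> x) ^ Suc (b x - 1) = (u - \<alpha> x) ^ b x" by (simp only:)
    qed
    finally show ?thesis .
  qed
  have contG: "continuous_on ({0<..} \<times> sphere cc R) (\<lambda>z. G (fst z) (snd z))"
    unfolding G_def by (intro continuous_intros) (auto dest: sph_zero)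
  have contGt: "continuous_on (sphere cc R) (G t)" if "t > 0" for t
    unfolding G_def by (intro continuous_intros) (auto dest: sph_zero)
  have Gint: "G t contour_integrable_on \<gamma>" if "t > 0" for t
    unfolding \<gamma>_def using contGt[OF that] R by (intro contour_integrable_continuous_circlepath) simp
  have real: "w t \<in> \<real>" for t
  proof -
    have q1: "cnj (poly Q (cnj u)) = poly Q u" for u
      using poly_cnj_real[of Q "cnj u"] by (simp add: Q_def coeff_map_poly)
    have p1: "cnj (poly Pc (cnj u)) = poly Pc u" for u
      using poly_cnj_real[of Pc "cnj u"] by (simp add: Pc_def coeff_map_poly)
    have "cnj (G t (cnj u)) = G t u" for u
      unfolding G_def using q1[of u] p1[of u] by (simp add: exp_cnj)
    from real_contour[of "G t" c R, OF this]
    have "cnj (contour_integral \<gamma> (G t)) = - contour_integral \<gamma> (G t)" unfolding \<gamma>_def cc_def .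
    then have "cnj (w t) = w t" unfolding wform by simp
    then show ?thesis using Reals_cnj_iff by blast
  qed
  have cI: "continuous_on {0<..} (\<lambda>t. contour_integral \<gamma> (G t))"
    unfolding \<gamma>_def by (rule contour_param_cont[where G=G and U="{0<..}" and c=cc and R=R, OF contG]) (use R in auto)
  have cw: "continuous_on {0<..1} w"
  proof -
    have "continuous_on {0<..1} (\<lambda>t. contour_integral \<gamma> (G t) / (2 * pi * \<i>))"
      by (intro continuous_intros continuous_on_subset[OF cI]) auto
    moreover have "w = (\<lambda>t. contour_integral \<gamma> (G t) / (2 * pi * \<i>))" using wform by (simp add: fun_eq_iff)
    ultimately show ?thesis by simp
  qed
  have expb: "norm (exp ((complex_of_real x - u) * complex_of_real (ln t))) \<le> t powr (x - \<sigma>)"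
    if t: "t \<in> {0<..1}" and u: "u \<in> sphere cc R" for t x u
  proof -
    have L: "ln t \<le> 0" using t by simp
    have "Re ((complex_of_real x - u) * complex_of_real (ln t)) = (x - Re u) * ln t" by simp
    also have "\<dots> \<le> (x - \<sigma>) * ln t" using sph_re[OF u] L by (intro mult_right_mono_neg) auto
    finally have "norm (exp ((complex_of_real x - u) * complex_of_real (ln t))) \<le> exp ((x - \<sigma>) * ln t)"
      by (simp add: norm_exp_eq_Re)
    also have "\<dots> = t powr (x - \<sigma>)" using t by (simp add: powr_def)
    finally show ?thesis .
  qed
  have bound_lemma: "norm (contour_integral \<gamma> f / (2 * pi * \<i>)) \<le> K * R"
    if "f contour_integrable_on \<gamma>" "K \<ge> 0" "\<And>u. u \<in> sphere cc R \<Longrightarrow> norm (f u) \<le> K" for f K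
  proof -
    have "norm (contour_integral \<gamma> f) \<le> K * (2 * pi * R)"
      using has_contour_integral_bound_circlepath[OF has_contour_integral_integral[OF that(1)[unfolded \<gamma>_def]] that(2) R] that(3)
      unfolding \<gamma>_def by (auto simp: dist_norm norm_minus_commute)
    then show ?thesis by (simp add: norm_divide norm_mult divide_le_eq mult_ac)
  qed
  have "continuous_on (sphere cc R) (\<lambda>u. poly Q u / poly Pc u)"
    by (intro continuous_intros) (use sph_nz in auto)
  then obtain B where B0: "B \<ge> 0" and Bb: "\<forall>u\<in>sphere cc R. norm (poly Q u / poly Pc u) \<le> B"
    using cont_bound_sphere by blast
  have wb: "norm (w t) \<le> B * t powr (-1 - \<sigma>) * R" if t: "t \<in> {0<..1}" for t
    unfolding wform
  proof (rule bound_lemma[OF Gint])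
    fix u assume u: "u \<in> sphere cc R"
    have "G t u = (poly Q u / poly Pc u) * exp ((complex_of_real (-1) - u) * complex_of_real (ln t))"
    proof -
      have e: "(- u - 1) * complex_of_real (ln t) = (complex_of_real (-1) - u) * complex_of_real (ln t)" by simp
      show ?thesis unfolding G_def e by (simp only: times_divide_eq_left[symmetric] mult.commute)
    qed
    also have "norm \<dots> \<le> B * t powr (-1 - \<sigma>)"
      unfolding norm_mult using Bb u expb[OF t u, of "-1"] B0 by (intro mult_mono) auto
    finally show "norm (G t u) \<le> B * t powr (-1 - \<sigma>)" .
  qed (use t B0 in auto)
  have wint: "set_integrable lborel {0<..1} w"
  proof (rule set_integrable_bound[OF powr_set_integrable[of "-1 - \<sigma>" "B * R"]])
    show "-1 - \<sigma> > -1" using \<sigma> by simp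
    show "set_borel_measurable lborel {0<..1} w"
      unfolding set_borel_measurable_def using cw by (simp add: borel_measurable_continuous_on_indicator)
    show "AE x in lborel. x \<in> {0<..1} \<longrightarrow> norm (w x) \<le> norm (B * R * x powr (-1 - \<sigma>))"
      using wb B0 R by (intro AE_I2) (auto simp: mult_ac)
  qed
  have moments: "complex_of_real (poly q (real n) / poly p (real n))
          = (LINT t:{0<..1}|lborel. complex_of_real (t ^ n) * w t)" for n
  proof (cases "q = 0")
    case True
    then have "Q = 0" by (simp add: Q_def)
    then have "w t = 0" for t unfolding wform G_def by simp
    then show ?thesis using True by simp
  next
    case False
    then have degqp: "degree q < degree p" using deg by simp
    define N where "N = (of_nat n :: complex)"
    define H where "H t u = poly Q u * exp ((N - u) * complex_of_real (ln t)) / (poly Pc u * (N - u))" for t u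
    define H' where "H' t u = complex_of_real (t ^ n) * G t u" for t u
    have Nu: "N - u \<noteq> 0" if "u \<in> sphere cc R" for u
    proof -
      have "Re (N - u) > 0" using sph_re[OF that] \<sigma> by (simp add: N_def)
      then show ?thesis by auto
    qed
    have Nu_zero: "dist cc u \<noteq> R" if "N - u = 0" for u using Nu[of u] that by auto
    have NR: "R \<noteq> dist cc N" using Nu_zero[of N] by auto
    have derH: "((\<lambda>t. H t u) has_vector_derivative H' t u) (at t)" if t: "t > 0" and u: "u \<in> sphere cc R" for t u
    proof -
      define k where "k = poly Q u / (poly Pc u * (N - u))"
      have f: "((\<lambda>t. (N - u) * complex_of_real (ln t)) has_vector_derivative ((N - u) * complex_of_real (inverse t))) (at t)"
        by (intro has_vector_derivative_mult_right has_vector_derivative_of_real DERIV_ln t)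
      have "((\<lambda>t. k * exp ((N - u) * complex_of_real (ln t))) has_vector_derivative
             k * ((N - u) * complex_of_real (inverse t) * exp ((N - u) * complex_of_real (ln t)))) (at t)"
        using has_vector_derivative_mult_right[OF field_vector_diff_chain_at[OF f DERIV_exp]] by (simp add: o_def)
      moreover have "(\<lambda>t. k * exp ((N - u) * complex_of_real (ln t))) = (\<lambda>t. H t u)"
        by (auto simp: H_def k_def fun_eq_iff)
      moreover have "k * ((N - u) * complex_of_real (inverse t) * exp ((N - u) * complex_of_real (ln t))) = H' t u"
      proof -
        have "(N - u) * complex_of_real (ln t) = complex_of_real (real n * ln t + ln t) + (- u - 1) * complex_of_real (ln t)"
          by (simp add: N_def algebra_simps)
        then have "exp ((N - u) * complex_of_real (ln t)) = exp (complex_of_real (real n * ln t + ln t) + (- u - 1) * complex_of_real (ln t))"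
          by (simp only:)
        also have "\<dots> = complex_of_real (exp (real n * ln t + ln t)) * exp ((- u - 1) * complex_of_real (ln t))"
          by (simp only: exp_add exp_of_real)
        also have "exp (real n * ln t + ln t) = t ^ n * t" using t by (simp add: exp_add exp_of_nat_mult)
        finally have ee: "exp ((N - u) * complex_of_real (ln t)) = complex_of_real (t ^ n * t) * exp ((- u - 1) * complex_of_real (ln t))" .
        show ?thesis unfolding k_def H'_def G_def ee using Nu[OF u] sph_nz[OF u] t by (simp add: field_simps)
      qed
      ultimately show ?thesis by simp
    qed
    have contH: "continuous_on ({0<..} \<times> sphere cc R) (\<lambda>z. H (fst z) (snd z))"
      unfolding H_def by (intro continuous_intros) (auto dest: sph_zero Nu_zero simp: NR)
    have contH': "continuous_on ({0<..} \<times> sphere cc R) (\<lambda>z. H' (fst z) (snd z))"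
      unfolding H'_def by (rule continuous_on_mult[OF _ contG]) (intro continuous_intros)
    define F where "F t = contour_integral \<gamma> (H t) / (2 * pi * \<i>)" for t
    have derF: "(F has_vector_derivative (complex_of_real (t ^ n) * w t)) (at t)" if t: "t > 0" for t
    proof -
      have "((\<lambda>t. contour_integral \<gamma> (H t)) has_vector_derivative contour_integral \<gamma> (H' t)) (at t within {0<..})"
        unfolding \<gamma>_def
      proof (rule contour_param_deriv[where G=H and G'=H' and U="{0<..}" and c=cc and R=R, OF _ contH contH'])
        fix s :: real and u assume su: "s \<in> {0<..}" "u \<in> sphere cc R"
        have "0 < s" using su by simp
        from derH[OF this su(2)] show "((\<lambda>t. H t u) has_vector_derivative H' s u) (at s within {0<..})"
          by (rule has_vector_derivative_at_within)
      next
        show "t \<in> {0<..}" using t by simp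
      next
        show "convex ({0<..} :: real set)" by (rule convex_real_interval)
      next
        show "0 \<le> R" using R by simp
      qed
      note X = this
      have ao: "at t within {0<..} = at t" using t by (intro at_within_open) auto
      have d: "((\<lambda>t. contour_integral \<gamma> (H t)) has_vector_derivative contour_integral \<gamma> (H' t)) (at t)"
        using X unfolding ao .
      have "contour_integral \<gamma> (H' t) = complex_of_real (t ^ n) * contour_integral \<gamma> (G t)"
        unfolding H'_def by (rule contour_integral_lmul[OF Gint[OF t]])
      then have e: "contour_integral \<gamma> (H' t) / (2 * pi * \<i>) = complex_of_real (t ^ n) * w t"
        unfolding wform by simp
      have "((\<lambda>t. contour_integral \<gamma> (H t) * inverse (2 * pi * \<i>)) has_vector_derivative contour_integral \<gamma> (H' t) * inverse (2 * pi * \<i>)) (at t)"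
        by (rule has_vector_derivative_mult_left[OF d])
      then show ?thesis unfolding F_def e[symmetric] by (simp only: divide_inverse)
    qed
    have "continuous_on (sphere cc R) (\<lambda>u. poly Q u / (poly Pc u * (N - u)))"
      by (intro continuous_intros) (auto dest: sph_zero Nu_zero simp: NR)
    then obtain Bn where Bn0: "Bn \<ge> 0" and Bnb: "\<forall>u\<in>sphere cc R. norm (poly Q u / (poly Pc u * (N - u))) \<le> Bn"
      using cont_bound_sphere by blast
    have Hint: "H t contour_integrable_on \<gamma>" if "t > 0" for t
    proof -
      have "continuous_on (sphere cc R) (H t)"
        unfolding H_def using that by (intro continuous_intros) (auto dest: sph_zero Nu_zero simp: NR)
      then show ?thesis unfolding \<gamma>_def using R by (intro contour_integrable_continuous_circlepath) simp
    qed
    have Fb: "norm (F t) \<le> Bn * t powr (real n - \<sigma>) * R" if t: "t \<in> {0<..1}" for t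
    proof -
      have "F t = contour_integral \<gamma> (H t) / (2 * pi * \<i>)" by (simp only: F_def)
      also have "norm \<dots> \<le> Bn * t powr (real n - \<sigma>) * R"
      proof (rule bound_lemma)
        show "H t contour_integrable_on \<gamma>" using t by (intro Hint) auto
        fix u assume u: "u \<in> sphere cc R"
        have "H t u = (poly Q u / (poly Pc u * (N - u))) * exp ((complex_of_real (real n) - u) * complex_of_real (ln t))"
          unfolding H_def N_def by simp
        also have "norm \<dots> \<le> Bn * t powr (real n - \<sigma>)"
          unfolding norm_mult using Bnb u expb[OF t u, of "real n"] Bn0 by (intro mult_mono) auto
        finally show "norm (H t u) \<le> Bn * t powr (real n - \<sigma>)" .
      qed (use Bn0 in auto)
      finally show ?thesis .
    qed
    have lim0: "(F \<longlongrightarrow> 0) (at_right 0)"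
    proof (rule Lim_null_comparison)
      show "\<forall>\<^sub>F t in at_right 0. norm (F t) \<le> Bn * t powr (real n - \<sigma>) * R"
        unfolding eventually_at_right_field by (intro exI[of _ 1]) (auto intro!: Fb)
      have "((\<lambda>t::real. t powr (real n - \<sigma>)) \<longlongrightarrow> 0) (at_right 0)"
        by (rule tendsto_zero_powrI) (use \<sigma> in \<open>auto intro!: tendsto_ident_at eventually_mono[OF eventually_at_right_less]\<close>)
      then show "((\<lambda>t. Bn * t powr (real n - \<sigma>) * R) \<longlongrightarrow> 0) (at_right 0)"
        by (intro tendsto_mult_right_zero tendsto_mult_left_zero)
    qed
    have lim1: "(F \<longlongrightarrow> F 1) (at_left 1)"
    proof -
      have "isCont F 1" using has_vector_derivative_continuous[OF derF[of 1]] by simp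
      then show ?thesis unfolding isCont_def by (rule tendsto_mono[OF at_le, rotated]) simp
    qed
    have ftc: "(LBINT x=ereal 0..ereal 1. complex_of_real (x ^ n) * w x) = F 1 - 0"
    proof (rule interval_integral_FTC_integrable)
      show "ereal 0 < ereal 1" by simp
      fix x assume x: "ereal 0 < ereal x" "ereal x < ereal 1"
      then show "(F has_vector_derivative complex_of_real (x ^ n) * w x) (at x)" by (intro derF) simp
      have "continuous_on {0<..<1} w" by (rule continuous_on_subset[OF cw]) auto
      then have "isCont w x" using x by (simp add: continuous_on_eq_continuous_at)
      then show "isCont (\<lambda>x. complex_of_real (x ^ n) * w x) x" by (intro continuous_intros)
    next
      show "set_integrable lborel (einterval (ereal 0) (ereal 1)) (\<lambda>x. complex_of_real (x ^ n) * w x)"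
        unfolding einterval_eq_Icc
      proof (rule set_integrable_bound[OF set_integrable_subset[OF wint]])
        show "{0<..<1::real} \<in> sets lborel" "{0<..<1::real} \<subseteq> {0<..1}" by auto
        have "continuous_on {0<..<1} (\<lambda>x. complex_of_real (x ^ n) * w x)"
          by (intro continuous_intros continuous_on_subset[OF cw]) auto
        then show "set_borel_measurable lborel {0<..<1} (\<lambda>x. complex_of_real (x ^ n) * w x)"
          unfolding set_borel_measurable_def by (simp add: borel_measurable_continuous_on_indicator)
        show "AE x in lborel. x \<in> {0<..<1} \<longrightarrow> norm (complex_of_real (x ^ n) * w x) \<le> norm (w x)"
        proof (intro AE_I2 impI)
          fix x :: real assume "x \<in> {0<..<1}"
          then have "\<bar>x ^ n\<bar> \<le> 1" by (simp add: power_le_one abs_of_nonneg)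
          then have h1: "norm (complex_of_real (x ^ n)) \<le> 1" by (simp only: norm_of_real)
          show "norm (complex_of_real (x ^ n) * w x) \<le> norm (w x)"
            unfolding norm_mult using h1 by (intro mult_left_le_one_le) auto
        qed
      qed
    next
      show "((F \<circ> real_of_ereal) \<longlongrightarrow> 0) (at_right (ereal 0))"
        unfolding at_right_ereal tendsto_compose_filtermap[symmetric] using lim0 by (simp add: o_def)
      show "((F \<circ> real_of_ereal) \<longlongrightarrow> F 1) (at_left (ereal 1))"
        unfolding at_left_ereal tendsto_compose_filtermap[symmetric] using lim1 by (simp add: o_def)
    qed
    have lint: "(LINT t:{0<..1}|lborel. complex_of_real (t ^ n) * w t) = (LBINT x=ereal 0..ereal 1. complex_of_real (x ^ n) * w x)"
    proof -
      have "(LBINT x=ereal 0..ereal 1. complex_of_real (x ^ n) * w x) = (LINT t:{0<..<1}|lborel. complex_of_real (t ^ n) * w t)"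
        by (simp add: interval_lebesgue_integral_le_eq)
      also have "\<dots> = (LINT t:{0<..1}|lborel. complex_of_real (t ^ n) * w t)"
        by (rule set_integral_discrete_difference[where X="{1}"]) auto
      finally show ?thesis ..
    qed
    have "contour_integral \<gamma> (H 1) = contour_integral (circlepath cc R) (\<lambda>u. poly Q u / (poly Pc u * (N - u)))"
      unfolding H_def \<gamma>_def by simp
    also have "\<dots> = 2 * pi * \<i> * (poly Q N / poly Pc N)"
    proof (rule key_residue)
      show "Pc = (\<Prod>j<m. [:- \<alpha> j, 1:] ^ b j)" using p_def Pc_def by simp
      show "degree Q < degree Pc" unfolding Q_def Pc_def using degqp by (simp add: degree_map_poly)
      show "\<forall>j<m. \<alpha> j \<in> ball cc R" by (rule \<alpha>in)
      show "R < norm (N - cc)"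
      proof -
        have "N - cc = complex_of_real (real n - c)" by (simp add: N_def cc_def)
        then have "norm (N - cc) = \<bar>real n - c\<bar>" by (simp only: norm_of_real)
        then have "norm (N - cc) = real n - c" using cR R by simp
        then show ?thesis using cR by simp
      qed
    qed (rule R)
    finally have "F 1 = poly Q N / poly Pc N" unfolding F_def by simp
    also have "\<dots> = complex_of_real (poly q (real n) / poly p (real n))"
      unfolding Q_def Pc_def N_def using poly_map_of_real[of q "real n"] poly_map_of_real[of p "real n"] by simp
    finally show ?thesis using ftc lint by simp
  qed
  show ?thesis using real cw wint moments by blast
qed


end
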